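(* Let $p$ be a prime, $\tau\in\mathbb{Z}$, $a,b$ positive integers, and $\alpha,\beta$ nonnegative integers such that $p^\beta$ exactly divides $\gcd(a,b)$ and $p^\alpha$ divides $a+b$. Then $p^{\alpha-\beta}$ divides \[ \binom{a\tau+a-1}{a}\binom{b\tau+b}{b} \] (i.e. the $p$-adic valuation of this integer is at least $\alpha-\beta$).
   Context: Binomial coefficients with negative top argument are defined by $\binom{n}{k}=(-1)^k\binom{-n+k-1}{k}$ for $n<0$, $k\geq0$. *)

theory Defs
  imports "HOL-Computational_Algebra.Primes"
begin

definition int_binom :: "int \<Rightarrow> nat \<Rightarrow> int" where
  "int_binom n k =
     (if n \<ge> 0 then int (nat n choose k)
      else (-1) ^ k * int (nat (- n + int k - 1) choose k))"

end

theory Submission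
  imports Defs Complex_Main
begin

lemma int_binom_gbinomial: "(of_int (int_binom n k) :: rat) = of_int n gchoose k"
proof (cases "n \<ge> 0")
  case True
  then show ?thesis unfolding int_binom_def using binomial_gbinomial[of "nat n" k, where 'a=rat]
    by simp
next
  case False
  have "(of_int n :: rat) gchoose k = (-1)^k * (of_nat k - of_int n - 1 gchoose k)"
    by (rule gbinomial_negated_upper)
  moreover have "of_nat (nat (- n + int k - 1) choose k) = (of_nat k - of_int n - 1 gchoose k :: rat)"
    using binomial_gbinomial[of "nat (- n + int k - 1)" k, where 'a=rat] False by simp
  ultimately show ?thesis using False unfolding int_binom_def by simp
qed

lemma binom_prod: "int_binom n k * fact k = (\<Prod>i = 0..<k. n - int i)"
proof -
  have "(of_int (int_binom n k * fact k) :: rat) = of_int (\<Prod>i = 0..<k. n - int i)"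
    using gbinomial_mult_fact[of k "of_int n :: rat"] by (simp add: int_binom_gbinomial mult.commute)
  then show ?thesis by (metis of_int_eq_iff)
qed

lemma cnt: "(m::int) > 0 \<Longrightarrow> x div m - (x-1) div m = (if m dvd x then 1 else 0)"
proof -
  assume m: "m > 0"
  define d where "d = (x - 1) div m"
  define u where "u = (x - 1) mod m"
  have ub: "0 \<le> u" "u < m" unfolding u_def using m by auto
  have xe: "x = (u + 1) + m * d" unfolding d_def u_def
    using div_mult_mod_eq[of "x - 1" m] by (simp add: algebra_simps)
  have xd: "x div m = (u + 1) div m + d" using m unfolding xe by simp
  have xm: "x mod m = (u + 1) mod m" unfolding xe by simp
  show ?thesis
  proof (cases "u + 1 = m")
    case True
    then have "x div m = 1 + d" using xd m by simp
    moreover have "m dvd x" using xm True by (simp add: dvd_eq_mod_eq_0)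
    ultimately show ?thesis unfolding d_def by simp
  next
    case False
    then have lt: "u + 1 < m" using ub by simp
    then have "(u + 1) div m = 0" "(u + 1) mod m = u + 1" using ub by simp_all
    then have "x div m = d" "x mod m \<noteq> 0" using xd xm ub by simp_all
    then show ?thesis unfolding d_def by (simp add: dvd_eq_mod_eq_0)
  qed
qed

definition DD :: "nat \<Rightarrow> int \<Rightarrow> int \<Rightarrow> int" where
  "DD K q x = (\<Sum>j\<in>{1..K}. x div q ^ j)"

lemma DD0: "DD K q 0 = 0" unfolding DD_def by simp

lemma mult_bound:
  assumes "prime (q::int)" "x \<noteq> 0"
  shows "multiplicity q x \<le> nat \<bar>x\<bar>"
proof -
  let ?m = "multiplicity q x"
  have "q ^ ?m dvd x" by (rule multiplicity_dvd)
  then have "\<bar>q ^ ?m\<bar> \<le> \<bar>x\<bar>" using assms(2) by (simp add: dvd_imp_le_int)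
  moreover have "q \<ge> 2" using assms(1) prime_ge_2_int by blast
  then have "(2::int) ^ ?m \<le> q ^ ?m" by (simp add: power_mono)
  moreover have "int ?m < 2 ^ ?m"
    by (metis of_nat_less_numeral_power_cancel_iff less_exp)
  moreover have "q ^ ?m \<ge> 0" using \<open>q \<ge> 2\<close> by simp
  ultimately have "int ?m \<le> \<bar>x\<bar>" by linarith
  then show ?thesis by linarith
qed

lemma vstep:
  assumes "prime (q::int)" "x \<noteq> 0" "multiplicity q x \<le> K"
  shows "DD K q x - DD K q (x-1) = int (multiplicity q x)"
proof -
  let ?M = "multiplicity q x"
  have q0: "q > 0" using assms(1) prime_gt_0_int by blast
  have nu: "\<not> is_unit q" using assms(1) not_prime_unit by blast
  have "DD K q x - DD K q (x-1) = (\<Sum>j\<in>{1..K}. x div q ^ j - (x-1) div q ^ j)"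
    unfolding DD_def by (simp add: sum_subtractf)
  also have "\<dots> = (\<Sum>j\<in>{1..K}. if j \<le> ?M then 1 else 0)"
  proof (rule sum.cong)
    fix j assume "j \<in> {1..K}"
    have "x div q ^ j - (x-1) div q ^ j = (if q^j dvd x then 1 else 0)"
      using cnt[of "q^j" x] q0 by simp
    also have "\<dots> = (if j \<le> ?M then 1 else 0)"
      using power_dvd_iff_le_multiplicity[OF assms(2) nu] by simp
    finally show "x div q ^ j - (x-1) div q ^ j = (if j \<le> ?M then 1 else 0)" .
  qed simp
  also have "\<dots> = int (card ({1..K} \<inter> {j. j \<le> ?M}))"
    by (simp add: sum.If_cases)
  also have "{1..K} \<inter> {j. j \<le> ?M} = {1..?M}" using assms(3) by auto
  finally show ?thesis by simp
qed

lemma vprod: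
  assumes "prime (q::int)"
    and "\<forall>i<k. n - int i \<noteq> 0 \<and> nat \<bar>n - int i\<bar> \<le> K"
  shows "(\<Prod>i = 0..<k. n - int i) \<noteq> 0 \<and>
         int (multiplicity q (\<Prod>i = 0..<k. n - int i)) = DD K q n - DD K q (n - int k)"
  using assms(2)
proof (induction k)
  case 0
  then show ?case by simp
next
  case (Suc k)
  have IH: "(\<Prod>i = 0..<k. n - int i) \<noteq> 0 \<and>
         int (multiplicity q (\<Prod>i = 0..<k. n - int i)) = DD K q n - DD K q (n - int k)"
    using Suc by auto
  have f: "n - int k \<noteq> 0" "nat \<bar>n - int k\<bar> \<le> K" using Suc.prems by auto
  have mb: "multiplicity q (n - int k) \<le> K"
    using mult_bound[OF assms(1) f(1)] f(2) by linarith
  have pe: "prime_elem q" using assms(1) by (rule prime_imp_prime_elem)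
  have "(\<Prod>i = 0..<Suc k. n - int i) = (\<Prod>i = 0..<k. n - int i) * (n - int k)" by simp
  moreover have "int (multiplicity q ((\<Prod>i = 0..<k. n - int i) * (n - int k))) =
      int (multiplicity q (\<Prod>i = 0..<k. n - int i)) + int (multiplicity q (n - int k))"
    using prime_elem_multiplicity_mult_distrib[OF pe] IH f(1) by simp
  moreover have "int (multiplicity q (n - int k)) = DD K q (n - int k) - DD K q (n - int k - 1)"
    using vstep[OF assms(1) f(1) mb] by simp
  ultimately show ?case using IH f(1) by (simp add: algebra_simps)
qed

lemma level:
  fixes m A B x y :: int
  assumes "m > 0" "m dvd A + B" "\<not> m dvd A" "m dvd x + y + 1"
  shows "((x+A) div m - x div m - A div m) + ((y+B) div m - y div m - B div m) \<ge> 1"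
proof -
  have e1: "(x+A) div m - x div m - A div m = (x mod m + A mod m) div m"
    using div_add1_eq[of x A m] by simp
  have e2: "(y+B) div m - y div m - B div m = (y mod m + B mod m) div m"
    using div_add1_eq[of y B m] by simp
  define u r w s where "u = x mod m" "r = A mod m" "w = y mod m" "s = B mod m"
  have bnd: "0 \<le> u" "u < m" "0 \<le> w" "w < m" "0 \<le> r" "r < m" "0 \<le> s" "s < m"
    using assms(1) unfolding u_r_w_s_def by auto
  have r0: "r \<noteq> 0" using assms(3) unfolding u_r_w_s_def by (simp add: dvd_eq_mod_eq_0)
  have d1: "m dvd r + s" using assms(2) unfolding u_r_w_s_def
    by (simp add: dvd_eq_mod_eq_0 mod_add_eq)
  have d2: "m dvd u + w + 1"
  proof -
    have "(u + w + 1) mod m = ((u + w) mod m + 1) mod m" by (simp add: mod_add_left_eq)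
    also have "(u + w) mod m = (x + y) mod m" unfolding u_r_w_s_def by (rule mod_add_eq)
    also have "((x + y) mod m + 1) mod m = (x + y + 1) mod m" by (simp add: mod_add_left_eq)
    finally show ?thesis using assms(4) by (simp add: dvd_eq_mod_eq_0)
  qed
  obtain k1 where k1: "r + s = m * k1" using d1 by auto
  obtain k2 where k2: "u + w + 1 = m * k2" using d2 by auto
  have "k1 = 1"
  proof -
    have rp: "r > 0" using r0 bnd by simp
    have h1: "m * k1 > m * 0" using k1 bnd rp by linarith
    have h2: "m * k1 < m * 2" using k1 bnd by linarith
    have "k1 > 0" using h1 assms(1) mult_less_cancel_left_pos by blast
    moreover have "k1 < 2" using h2 assms(1) mult_less_cancel_left_pos by blast
    ultimately show ?thesis by simp
  qed
  have "k2 = 1"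
  proof -
    have h1: "m * k2 > m * 0" using k2 bnd by linarith
    have h2: "m * k2 < m * 2" using k2 bnd by linarith
    have "k2 > 0" using h1 assms(1) mult_less_cancel_left_pos by blast
    moreover have "k2 < 2" using h2 assms(1) mult_less_cancel_left_pos by blast
    ultimately show ?thesis by simp
  qed
  have "(u + r) div m \<ge> 0" "(w + s) div m \<ge> 0" using bnd pos_imp_zdiv_nonneg_iff[OF assms(1)] by simp_all
  moreover have "(u + r) div m \<ge> 1 \<or> (w + s) div m \<ge> 1"
  proof (rule ccontr)
    assume "\<not> ?thesis"
    then have "(u + r) div m = 0" "(w + s) div m = 0" using calculation by auto
    then have "u + r < m" "w + s < m"
      using pos_imp_zdiv_pos_iff[OF assms(1), of "u + r"] pos_imp_zdiv_pos_iff[OF assms(1), of "w + s"]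
      by simp_all
    then show False using k1 k2 \<open>k1 = 1\<close> \<open>k2 = 1\<close> by simp
  qed
  ultimately show ?thesis using e1 e2 unfolding u_r_w_s_def by linarith
qed

lemma nonneg_term:
  fixes m A x :: int
  assumes "m > 0"
  shows "(x+A) div m - x div m - A div m \<ge> 0"
  using div_add1_eq[of x A m] assms by (simp add: pos_imp_zdiv_nonneg_iff)

theorem lemma4p11:
  fixes p :: nat and \<tau> :: int and a b :: nat and \<alpha> \<beta> :: nat
  assumes "prime p"
    and "a > 0" and "b > 0"
    and "p ^ \<beta> dvd gcd a b" and "\<not> p ^ (\<beta> + 1) dvd gcd a b"
    and "p ^ \<alpha> dvd a + b"
  shows "int p ^ (\<alpha> - \<beta>) dvd
           int_binom (int a * \<tau> + int a - 1) a * int_binom (int b * \<tau> + int b) b"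
proof -
  let ?X = "int_binom (int a * \<tau> + int a - 1) a"
  let ?Y = "int_binom (int b * \<tau> + int b) b"
  define q where "q = int p"
  have qp: "prime q" using assms(1) unfolding q_def by simp
  have q0: "q > 0" using qp prime_gt_0_int by blast
  have nu: "\<not> is_unit q" using qp not_prime_unit by blast
  show ?thesis
  proof (cases "\<alpha> \<le> \<beta> \<or> \<tau> = 0 \<or> \<tau> = -1")
    case True
    moreover have "\<tau> = 0 \<Longrightarrow> ?X = 0" unfolding int_binom_def using assms(2) by simp
    moreover have "\<tau> = -1 \<Longrightarrow> ?Y = 0" unfolding int_binom_def using assms(3) by simp
    ultimately show ?thesis by auto
  next
    case False
    then have ab: "\<beta> < \<alpha>" and t0: "\<tau> \<noteq> 0" and t1: "\<tau> \<noteq> -1" by auto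
    define K where "K = nat (\<bar>int a * \<tau>\<bar> + int a + \<bar>int b * \<tau>\<bar> + int b) + \<alpha>"
    let ?D = "DD K q"
    have "\<alpha> \<le> K" unfolding K_def by simp
    have fX: "\<forall>i<a. int a * \<tau> + int a - 1 - int i \<noteq> 0 \<and> nat \<bar>int a * \<tau> + int a - 1 - int i\<bar> \<le> K"
    proof (intro allI impI conjI)
      fix i assume i: "i < a"
      show "int a * \<tau> + int a - 1 - int i \<noteq> 0"
      proof (cases "\<tau> > 0")
        case True
        then have "int a * \<tau> \<ge> int a" using assms(2) by simp
        then show ?thesis using i by linarith
      next
        case False
        then have "\<tau> \<le> -1" using t0 by simp
        then have "int a * \<tau> \<le> - int a" using assms(2)
          by (metis mult.right_neutral mult_left_mono mult_minus_right of_nat_0_le_iff)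
        then show ?thesis using i by linarith
      qed
      show "nat \<bar>int a * \<tau> + int a - 1 - int i\<bar> \<le> K" unfolding K_def using i by linarith
    qed
    have fY: "\<forall>i<b. int b * \<tau> + int b - int i \<noteq> 0 \<and> nat \<bar>int b * \<tau> + int b - int i\<bar> \<le> K"
    proof (intro allI impI conjI)
      fix i assume i: "i < b"
      show "int b * \<tau> + int b - int i \<noteq> 0"
      proof (cases "\<tau> \<ge> 0")
        case True
        then have "int b * \<tau> \<ge> 0" by simp
        then show ?thesis using i by linarith
      next
        case False
        then have "\<tau> \<le> -2" using t1 by simp
        then have "int b * \<tau> \<le> int b * (-2)"
          by (intro mult_left_mono) auto
        then show ?thesis using i by linarith
      qed
      show "nat \<bar>int b * \<tau> + int b - int i\<bar> \<le> K" unfolding K_def using i by linarith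
    qed
    have fa: "\<forall>i<a. int a - int i \<noteq> 0 \<and> nat \<bar>int a - int i\<bar> \<le> K"
    proof (intro allI impI conjI)
      fix i assume i: "i < a"
      show "int a - int i \<noteq> 0" using i by simp
      show "nat \<bar>int a - int i\<bar> \<le> K" unfolding K_def using i by linarith
    qed
    have fb: "\<forall>i<b. int b - int i \<noteq> 0 \<and> nat \<bar>int b - int i\<bar> \<le> K"
    proof (intro allI impI conjI)
      fix i assume i: "i < b"
      show "int b - int i \<noteq> 0" using i by simp
      show "nat \<bar>int b - int i\<bar> \<le> K" unfolding K_def using i by linarith
    qed
    note pX = vprod[OF qp fX] and pY = vprod[OF qp fY] and pa = vprod[OF qp fa] and pb = vprod[OF qp fb]
    have ea: "fact a = (\<Prod>i = 0..<a. int a - int i)"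
      using binom_prod[of "int a" a] by (simp add: int_binom_def)
    have eb: "fact b = (\<Prod>i = 0..<b. int b - int i)"
      using binom_prod[of "int b" b] by (simp add: int_binom_def)
    have pe: "prime_elem q" using qp by (rule prime_imp_prime_elem)
    have X0: "?X \<noteq> 0" using pX binom_prod[of "int a * \<tau> + int a - 1" a] by auto
    have Y0: "?Y \<noteq> 0" using pY binom_prod[of "int b * \<tau> + int b" b] by auto
    have fa0: "(fact a :: int) \<noteq> 0" "(fact b :: int) \<noteq> 0" by auto
    define x where "x = int a * \<tau> - 1"
    define y where "y = int b * \<tau>"
    have xa: "x + int a = int a * \<tau> + int a - 1" unfolding x_def by simp
    have yb: "y + int b = int b * \<tau> + int b" unfolding y_def by simp
    have mX0: "int (multiplicity q ?X) = ?D (int a * \<tau> + int a - 1) - ?D (int a * \<tau> - 1) - ?D (int a)"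
    proof -
      have "int (multiplicity q (?X * fact a)) = int (multiplicity q ?X) + int (multiplicity q (fact a :: int))"
        using prime_elem_multiplicity_mult_distrib[OF pe X0 fa0(1)] by simp
      moreover have "int (multiplicity q (?X * fact a)) = ?D (int a * \<tau> + int a - 1) - ?D (int a * \<tau> - 1)"
        using pX binom_prod[of "int a * \<tau> + int a - 1" a] by simp
      moreover have "int (multiplicity q (fact a :: int)) = ?D (int a)"
        using pa ea by (simp add: DD0)
      ultimately show ?thesis by linarith
    qed
    have mY0: "int (multiplicity q ?Y) = ?D (int b * \<tau> + int b) - ?D (int b * \<tau>) - ?D (int b)"
    proof -
      have "int (multiplicity q (?Y * fact b)) = int (multiplicity q ?Y) + int (multiplicity q (fact b :: int))"
        using prime_elem_multiplicity_mult_distrib[OF pe Y0 fa0(2)] by simp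
      moreover have "int (multiplicity q (?Y * fact b)) = ?D (int b * \<tau> + int b) - ?D (int b * \<tau>)"
        using pY binom_prod[of "int b * \<tau> + int b" b] by simp
      moreover have "int (multiplicity q (fact b :: int)) = ?D (int b)"
        using pb eb by (simp add: DD0)
      ultimately show ?thesis by linarith
    qed
    have mX: "int (multiplicity q ?X) = ?D (x + int a) - ?D x - ?D (int a)"
      using mX0 unfolding xa by (simp add: x_def)
    have mY: "int (multiplicity q ?Y) = ?D (y + int b) - ?D y - ?D (int b)"
      using mY0 unfolding yb by (simp add: y_def)
    define T where "T j = ((x + int a) div q^j - x div q^j - int a div q^j) +
                          ((y + int b) div q^j - y div q^j - int b div q^j)" for j
    have s1: "int (multiplicity q (?X * ?Y)) = int (multiplicity q ?X) + int (multiplicity q ?Y)"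
      using prime_elem_multiplicity_mult_distrib[OF pe X0 Y0] by simp
    have s2: "int (multiplicity q ?X) + int (multiplicity q ?Y) = (\<Sum>j\<in>{1..K}. T j)"
      unfolding mX mY DD_def T_def by (simp only: sum_subtractf sum.distrib)
    have s3: "(\<Sum>j\<in>{1..K}. T j) \<ge> (\<Sum>j\<in>{1..K}. if \<beta> < j \<and> j \<le> \<alpha> then 1 else 0)"
    proof (rule sum_mono)
      fix j assume j: "j \<in> {1..K}"
      have qj: "q ^ j > 0" using q0 by simp
      have n1: "T j \<ge> 0" unfolding T_def using nonneg_term[OF qj, of x "int a"] nonneg_term[OF qj, of y "int b"]
        by linarith
      show "(if \<beta> < j \<and> j \<le> \<alpha> then 1 else 0) \<le> T j"
      proof (cases "\<beta> < j \<and> j \<le> \<alpha>")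
        case True
        have "p ^ j dvd p ^ \<alpha>" using True by (intro le_imp_power_dvd) simp
        then have dn: "p ^ j dvd a + b" using assms(6) by (rule dvd_trans)
        then have "int (p ^ j) dvd int (a + b)" by (simp only: int_dvd_int_iff)
        then have d1: "q ^ j dvd int a + int b" unfolding q_def by simp
        have "\<not> p ^ j dvd a"
        proof
          assume "p ^ j dvd a"
          moreover then have "p ^ j dvd b" using dn by (simp add: dvd_add_right_iff)
          ultimately have "p ^ j dvd gcd a b" by simp
          moreover have "p ^ (\<beta>+1) dvd p ^ j" using True by (intro le_imp_power_dvd) simp
          ultimately show False using assms(5) by (meson dvd_trans)
        qed
        have d2: "\<not> q ^ j dvd int a"
        proof
          assume "q ^ j dvd int a"
          then have "int (p ^ j) dvd int a" unfolding q_def by simp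
          then show False using \<open>\<not> p ^ j dvd a\<close> by (simp only: int_dvd_int_iff)
        qed
        have "x + y + 1 = (int a + int b) * \<tau>" unfolding x_def y_def by (simp add: algebra_simps)
        then have d3: "q ^ j dvd x + y + 1" using d1 by simp
        show ?thesis using level[OF qj d1 d2 d3] True unfolding T_def by simp
      qed (use n1 in auto)
    qed
    have s4: "(\<Sum>j\<in>{1..K}. if \<beta> < j \<and> j \<le> \<alpha> then 1 else 0) = int (card ({1..K} \<inter> {j. \<beta> < j \<and> j \<le> \<alpha>}))"
      by (simp add: sum.If_cases)
    have s5: "{1..K} \<inter> {j. \<beta> < j \<and> j \<le> \<alpha>} = {\<beta>+1..\<alpha>}"
      using \<open>\<alpha> \<le> K\<close> by auto
    have "int (\<alpha> - \<beta>) \<le> int (multiplicity q (?X * ?Y))"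
      using s1 s2 s3 s4 unfolding s5 by simp
    then have "\<alpha> - \<beta> \<le> multiplicity q (?X * ?Y)" by linarith
    then have "q ^ (\<alpha> - \<beta>) dvd ?X * ?Y" by (rule multiplicity_dvd')
    then show ?thesis unfolding q_def .
  qed
qed

end
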